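(* If a disjunctive program $P$ has an inconsistent module sequence, then $P$ is inconsistent.
   Context: A disjunctive program is a set of rules $A_1\vee\dots\vee A_m\leftarrow L_1,\dots,L_n$ ($m>0$, $n\ge0$), $A_j$ atoms, $L_i$ atoms or negated atoms $\mathtt{not}\,A$, possibly with function symbols. $\mathsf{Ground}(P)$ is its ground instantiation. For a set $M$ of ground atoms, $P^M$ is obtained from $\mathsf{Ground}(P)$ by deleting rules having some $\mathtt{not}\,B$ in the body with $B\in M$ and deleting the negative literals from the remaining rules; $M$ is a stable model iff it is a minimal Herbrand model of $P^M$. A program (ground or not) is consistent iff it has at least one stable model, inconsistent otherwise. The dependency graph has ground atoms as vertices and an edge $A\to B$ whenever some $r\in\mathsf{Ground}(P)$ has $A$ in its head and $B$ occurring in $r$ (body or head); $A$ depends on $B$ if there is a directed path from $A$ to $B$ (every atom depends on itself). With $GH$ the set of ground head atoms of $\mathsf{Ground}(P)$ and an enumeration $p_1,p_2,\dots$ of $GH$, the induced module sequence is $P_1=\{r\in\mathsf{Ground}(P)\mid p_1$ depends on some atom of $head(r)\}$, $P_{i+1}=P_i\cup\{r\in\mathsf{Ground}(P)\mid p_{i+1}$ depends on some atom of $head(r)\}$. A module sequence is inconsistent if some $P_i$ is inconsistent, and consistent otherwise. *)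

theory Defs
  imports Main
begin

datatype ('f,'v) trm = Var 'v | Fn 'f "('f,'v) trm list"

datatype ('p,'f,'v) atom = Atom 'p "('f,'v) trm list"

datatype ('p,'f,'v) lit = Pos "('p,'f,'v) atom" | Neg "('p,'f,'v) atom"

text \<open>A rule  A1 v ... v Am <- L1, ..., Ln.\<close>
datatype ('p,'f,'v) rule = Rule (head: "('p,'f,'v) atom list") (body: "('p,'f,'v) lit list")

type_synonym ('p,'f,'v) program = "('p,'f,'v) rule set"

definition disjunctive_program :: "('p,'f,'v) program \<Rightarrow> bool" where
  "disjunctive_program P \<longleftrightarrow> (\<forall>r\<in>P. head r \<noteq> [])"

fun lit_atom :: "('p,'f,'v) lit \<Rightarrow> ('p,'f,'v) atom" where
  "lit_atom (Pos a) = a" | "lit_atom (Neg a) = a"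

definition rule_atoms :: "('p,'f,'v) rule \<Rightarrow> ('p,'f,'v) atom set" where
  "rule_atoms r = set (head r) \<union> lit_atom ` set (body r)"

fun vars_trm :: "('f,'v) trm \<Rightarrow> 'v set" where
  "vars_trm (Var x) = {x}"
| "vars_trm (Fn f ts) = (\<Union>t\<in>set ts. vars_trm t)"

fun vars_atom :: "('p,'f,'v) atom \<Rightarrow> 'v set" where
  "vars_atom (Atom p ts) = (\<Union>t\<in>set ts. vars_trm t)"

definition ground_atom :: "('p,'f,'v) atom \<Rightarrow> bool" where
  "ground_atom a \<longleftrightarrow> vars_atom a = {}"

definition ground_rule :: "('p,'f,'v) rule \<Rightarrow> bool" where
  "ground_rule r \<longleftrightarrow> (\<forall>a\<in>rule_atoms r. ground_atom a)"

fun subst_trm :: "('v \<Rightarrow> ('f,'v) trm) \<Rightarrow> ('f,'v) trm \<Rightarrow> ('f,'v) trm" where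
  "subst_trm \<sigma> (Var x) = \<sigma> x"
| "subst_trm \<sigma> (Fn f ts) = Fn f (map (subst_trm \<sigma>) ts)"

fun subst_atom :: "('v \<Rightarrow> ('f,'v) trm) \<Rightarrow> ('p,'f,'v) atom \<Rightarrow> ('p,'f,'v) atom" where
  "subst_atom \<sigma> (Atom p ts) = Atom p (map (subst_trm \<sigma>) ts)"

fun subst_lit :: "('v \<Rightarrow> ('f,'v) trm) \<Rightarrow> ('p,'f,'v) lit \<Rightarrow> ('p,'f,'v) lit" where
  "subst_lit \<sigma> (Pos a) = Pos (subst_atom \<sigma> a)"
| "subst_lit \<sigma> (Neg a) = Neg (subst_atom \<sigma> a)"

definition subst_rule :: "('v \<Rightarrow> ('f,'v) trm) \<Rightarrow> ('p,'f,'v) rule \<Rightarrow> ('p,'f,'v) rule" where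
  "subst_rule \<sigma> r = Rule (map (subst_atom \<sigma>) (head r)) (map (subst_lit \<sigma>) (body r))"

definition Ground :: "('p,'f,'v) program \<Rightarrow> ('p,'f,'v) program" where
  "Ground P = {subst_rule \<sigma> r | r \<sigma>. r \<in> P \<and> ground_rule (subst_rule \<sigma> r)}"

definition reduct :: "('p,'f,'v) program \<Rightarrow> ('p,'f,'v) atom set \<Rightarrow> ('p,'f,'v) program" where
  "reduct P M = {Rule (head r) [l\<leftarrow>body r. case l of Pos _ \<Rightarrow> True | Neg _ \<Rightarrow> False] | r.
                   r \<in> Ground P \<and> (\<forall>B. Neg B \<in> set (body r) \<longrightarrow> B \<notin> M)}"

fun lit_true :: "('p,'f,'v) atom set \<Rightarrow> ('p,'f,'v) lit \<Rightarrow> bool" where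
  "lit_true M (Pos a) = (a \<in> M)"
| "lit_true M (Neg a) = (a \<notin> M)"

definition is_model :: "('p,'f,'v) atom set \<Rightarrow> ('p,'f,'v) program \<Rightarrow> bool" where
  "is_model M R \<longleftrightarrow> (\<forall>r\<in>R. (\<forall>l\<in>set (body r). lit_true M l) \<longrightarrow> (\<exists>a\<in>set (head r). a \<in> M))"

text \<open>Herbrand interpretations: sets of ground atoms.\<close>
definition minimal_herbrand_model :: "('p,'f,'v) atom set \<Rightarrow> ('p,'f,'v) program \<Rightarrow> bool" where
  "minimal_herbrand_model M R \<longleftrightarrow>
     (\<forall>a\<in>M. ground_atom a) \<and> is_model M R \<and> (\<forall>N. N \<subset> M \<longrightarrow> \<not> is_model N R)"

definition stable_model :: "('p,'f,'v) program \<Rightarrow> ('p,'f,'v) atom set \<Rightarrow> bool" where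
  "stable_model P M \<longleftrightarrow> minimal_herbrand_model M (reduct P M)"

definition consistent :: "('p,'f,'v) program \<Rightarrow> bool" where
  "consistent P \<longleftrightarrow> (\<exists>M. stable_model P M)"

definition dep_edges :: "('p,'f,'v) program \<Rightarrow> (('p,'f,'v) atom \<times> ('p,'f,'v) atom) set" where
  "dep_edges P = {(A, B) | A B r. r \<in> Ground P \<and> A \<in> set (head r) \<and> B \<in> rule_atoms r}"

text \<open>A depends on B: directed path from A to B (reflexive on all atoms).\<close>
definition depends :: "('p,'f,'v) program \<Rightarrow> ('p,'f,'v) atom \<Rightarrow> ('p,'f,'v) atom \<Rightarrow> bool" where
  "depends P A B \<longleftrightarrow> (A, B) \<in> (dep_edges P)\<^sup>*"

definition GH :: "('p,'f,'v) program \<Rightarrow> ('p,'f,'v) atom set" where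
  "GH P = {a | a r. r \<in> Ground P \<and> a \<in> set (head r)}"

text \<open>An enumeration p_0, p_1, ... of GH (indices start at 0): a bijection from an
  initial segment of the naturals (finite or all of nat) onto GH.\<close>
definition enumeration :: "('p,'f,'v) program \<Rightarrow> nat set \<Rightarrow> (nat \<Rightarrow> ('p,'f,'v) atom) \<Rightarrow> bool" where
  "enumeration P N p \<longleftrightarrow> (N = UNIV \<or> (\<exists>k. N = {..<k})) \<and> bij_betw p N (GH P)"

definition module :: "('p,'f,'v) program \<Rightarrow> (nat \<Rightarrow> ('p,'f,'v) atom) \<Rightarrow> nat \<Rightarrow> ('p,'f,'v) program" where
  "module P p i = {r \<in> Ground P. \<exists>j\<le>i. \<exists>a\<in>set (head r). depends P (p j) a}"

definition inconsistent_module_sequence :: "('p,'f,'v) program \<Rightarrow> nat set \<Rightarrow> (nat \<Rightarrow> ('p,'f,'v) atom) \<Rightarrow> bool" where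
  "inconsistent_module_sequence P N p \<longleftrightarrow> (\<exists>i\<in>N. \<not> consistent (module P p i))"

end

theory Submission
  imports Defs
begin

lemma subst_trm_ground: "vars_trm t = {} \<Longrightarrow> subst_trm \<sigma> t = t"
  by (induction t) (auto intro: map_idI)

lemma subst_trm_Var: "subst_trm Var t = t"
  by (induction t) (auto intro: map_idI)

lemma subst_atom_ground: "ground_atom a \<Longrightarrow> subst_atom \<sigma> a = a"
  by (cases a) (auto simp: ground_atom_def intro!: map_idI subst_trm_ground)

lemma subst_atom_Var: "subst_atom Var a = a"
  by (cases a) (auto simp: subst_trm_Var intro!: map_idI)

lemma subst_lit_ground: "ground_atom (lit_atom l) \<Longrightarrow> subst_lit \<sigma> l = l"
  by (cases l) (auto simp: subst_atom_ground)

lemma subst_lit_Var: "subst_lit Var l = l"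
  by (cases l) (auto simp: subst_atom_Var)

lemma subst_rule_ground: "ground_rule r \<Longrightarrow> subst_rule \<sigma> r = r"
  unfolding ground_rule_def rule_atoms_def subst_rule_def
  by (cases r) (auto intro!: map_idI subst_atom_ground subst_lit_ground)

lemma subst_rule_Var: "subst_rule Var r = r"
  unfolding subst_rule_def
  by (cases r) (auto intro!: map_idI simp: subst_atom_Var subst_lit_Var)

lemma Ground_ground: "r \<in> Ground P \<Longrightarrow> ground_rule r"
  unfolding Ground_def by auto

lemma Ground_sub:
  assumes "Q \<subseteq> Ground P" shows "Ground Q = Q"
proof
  show "Ground Q \<subseteq> Q"
  proof
    fix r assume "r \<in> Ground Q"
    then obtain r0 \<sigma> where "r = subst_rule \<sigma> r0" "r0 \<in> Q" unfolding Ground_def by auto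
    moreover have "ground_rule r0" using \<open>r0 \<in> Q\<close> assms Ground_ground by blast
    ultimately show "r \<in> Q" by (simp add: subst_rule_ground)
  qed
next
  show "Q \<subseteq> Ground Q"
  proof
    fix r assume r: "r \<in> Q"
    hence "ground_rule r" using assms Ground_ground by blast
    thus "r \<in> Ground Q" unfolding Ground_def using r subst_rule_Var[of r]
      by (metis (mono_tags, lifting) mem_Collect_eq)
  qed
qed

definition red :: "('p,'f,'v) rule \<Rightarrow> ('p,'f,'v) rule" where
  "red r = Rule (head r) [l\<leftarrow>body r. case l of Pos _ \<Rightarrow> True | Neg _ \<Rightarrow> False]"

lemma reduct_red: "reduct P M = {red r | r. r \<in> Ground P \<and> (\<forall>B. Neg B \<in> set (body r) \<longrightarrow> B \<notin> M)}"
  unfolding reduct_def red_def by simp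

lemma red_body_true:
  "(\<forall>l\<in>set (body (red r)). lit_true M l) \<longleftrightarrow> (\<forall>a. Pos a \<in> set (body r) \<longrightarrow> a \<in> M)"
proof
  assume "\<forall>l\<in>set (body (red r)). lit_true M l"
  thus "\<forall>a. Pos a \<in> set (body r) \<longrightarrow> a \<in> M" unfolding red_def by force
next
  assume H: "\<forall>a. Pos a \<in> set (body r) \<longrightarrow> a \<in> M"
  show "\<forall>l\<in>set (body (red r)). lit_true M l"
  proof
    fix l assume "l \<in> set (body (red r))"
    hence lb: "l \<in> set (body r)" and c: "case l of Pos _ \<Rightarrow> True | Neg _ \<Rightarrow> False"
      unfolding red_def by simp_all
    obtain a where la: "l = Pos a" using c by (cases l) auto
    show "lit_true M l" using H lb unfolding la by simp
  qed
qed

lemma head_red[simp]: "head (red r) = head r" by (simp add: red_def)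

lemma splitting:
  assumes QG: "Q \<subseteq> Ground P"
    and QU: "\<And>r. r \<in> Q \<Longrightarrow> rule_atoms r \<subseteq> U"
    and GQ: "\<And>r a. r \<in> Ground P \<Longrightarrow> a \<in> set (head r) \<Longrightarrow> a \<in> U \<Longrightarrow> r \<in> Q"
    and SM: "stable_model P M"
  shows "stable_model Q (M \<inter> U)"
proof -
  have GQQ: "Ground Q = Q" using Ground_sub[OF QG] .
  have negA: "Neg B \<in> set (body r) \<Longrightarrow> B \<in> rule_atoms r" for B r
    unfolding rule_atoms_def by force
  have posA: "Pos B \<in> set (body r) \<Longrightarrow> B \<in> rule_atoms r" for B r
    unfolding rule_atoms_def by force
  have headA: "a \<in> set (head r) \<Longrightarrow> a \<in> rule_atoms r" for a r
    unfolding rule_atoms_def by force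
  have neg_eq: "r \<in> Q \<Longrightarrow> (\<forall>B. Neg B \<in> set (body r) \<longrightarrow> B \<notin> M \<inter> U) \<longleftrightarrow> (\<forall>B. Neg B \<in> set (body r) \<longrightarrow> B \<notin> M)" for r
    using QU negA by blast
  have RQ: "reduct Q (M \<inter> U) = {red r | r. r \<in> Q \<and> (\<forall>B. Neg B \<in> set (body r) \<longrightarrow> B \<notin> M)}"
    unfolding reduct_red GQQ using neg_eq by blast
  from SM have gr: "\<forall>a\<in>M. ground_atom a" and mod: "is_model M (reduct P M)"
    and mini: "\<forall>N. N \<subset> M \<longrightarrow> \<not> is_model N (reduct P M)"
    unfolding stable_model_def minimal_herbrand_model_def by auto
  have modQ: "is_model (M \<inter> U) (reduct Q (M \<inter> U))"
    unfolding is_model_def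
  proof
    fix r' assume "r' \<in> reduct Q (M \<inter> U)"
    then obtain r where r': "r' = red r" and rQ: "r \<in> Q" and nb: "\<forall>B. Neg B \<in> set (body r) \<longrightarrow> B \<notin> M"
      unfolding RQ by blast
    show "(\<forall>l\<in>set (body r'). lit_true (M \<inter> U) l) \<longrightarrow> (\<exists>a\<in>set (head r'). a \<in> M \<inter> U)"
    proof
      assume "\<forall>l\<in>set (body r'). lit_true (M \<inter> U) l"
      hence "\<forall>l\<in>set (body (red r)). lit_true M l" unfolding r' red_body_true by blast
      moreover have "red r \<in> reduct P M" unfolding reduct_red using rQ QG nb by blast
      ultimately obtain a where "a \<in> set (head r)" "a \<in> M" using mod unfolding is_model_def by force
      moreover have "a \<in> U" using QU[OF rQ] headA[OF \<open>a \<in> set (head r)\<close>] by blast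
      ultimately show "\<exists>a\<in>set (head r'). a \<in> M \<inter> U" unfolding r' by auto
    qed
  qed
  have minQ: "\<forall>N. N \<subset> M \<inter> U \<longrightarrow> \<not> is_model N (reduct Q (M \<inter> U))"
  proof (intro allI impI notI)
    fix N assume NS: "N \<subset> M \<inter> U" and NM: "is_model N (reduct Q (M \<inter> U))"
    define N' where "N' = N \<union> (M - U)"
    have "N' \<subset> M" using NS unfolding N'_def by blast
    moreover have "is_model N' (reduct P M)"
      unfolding is_model_def
    proof
      fix r' assume "r' \<in> reduct P M"
      then obtain r where r': "r' = red r" and rG: "r \<in> Ground P" and nb: "\<forall>B. Neg B \<in> set (body r) \<longrightarrow> B \<notin> M"
        unfolding reduct_red by blast
      show "(\<forall>l\<in>set (body r'). lit_true N' l) \<longrightarrow> (\<exists>a\<in>set (head r'). a \<in> N')"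
      proof
        assume bt: "\<forall>l\<in>set (body r'). lit_true N' l"
        hence pb: "\<forall>a. Pos a \<in> set (body r) \<longrightarrow> a \<in> N'" unfolding r' red_body_true .
        show "\<exists>a\<in>set (head r'). a \<in> N'"
        proof (cases "r \<in> Q")
          case True
          have "\<forall>a. Pos a \<in> set (body r) \<longrightarrow> a \<in> N"
            using pb QU[OF True] posA unfolding N'_def by blast
          hence "\<forall>l\<in>set (body (red r)). lit_true N l" unfolding red_body_true .
          moreover have "red r \<in> reduct Q (M \<inter> U)" unfolding RQ using True nb by blast
          ultimately obtain a where "a \<in> set (head r)" "a \<in> N" using NM unfolding is_model_def by force
          thus ?thesis unfolding r' N'_def by auto
        next
          case False
          have "\<forall>a. Pos a \<in> set (body r) \<longrightarrow> a \<in> M" using pb NS unfolding N'_def by blast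
          hence "\<forall>l\<in>set (body (red r)). lit_true M l" unfolding red_body_true .
          moreover have "red r \<in> reduct P M" unfolding reduct_red using rG nb by blast
          ultimately obtain a where a: "a \<in> set (head r)" "a \<in> M" using mod unfolding is_model_def by force
          have "a \<notin> U" using GQ[OF rG a(1)] False by blast
          thus ?thesis using a unfolding r' N'_def by auto
        qed
      qed
    qed
    ultimately show False using mini by blast
  qed
  show ?thesis unfolding stable_model_def minimal_herbrand_model_def
    using gr modQ minQ by blast
qed

theorem proposition3p8:
  fixes P :: "('p,'f,'v) program"
  assumes "disjunctive_program P"
    and "enumeration P N p"
    and "inconsistent_module_sequence P N p"
  shows "\<not> consistent P"
proof
  assume "consistent P"
  then obtain M where SM: "stable_model P M" unfolding consistent_def by blast
  from assms(3) obtain i where inc: "\<not> consistent (module P p i)"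
    unfolding inconsistent_module_sequence_def by blast
  define U where "U = {a. \<exists>j\<le>i. depends P (p j) a}"
  have QG: "module P p i \<subseteq> Ground P" unfolding module_def by blast
  have QU: "rule_atoms r \<subseteq> U" if rQ: "r \<in> module P p i" for r
  proof
    fix b assume b: "b \<in> rule_atoms r"
    from rQ obtain j a where j: "j \<le> i" and a: "a \<in> set (head r)" and d: "depends P (p j) a"
      and rG: "r \<in> Ground P"
      unfolding module_def by blast
    have e: "(a, b) \<in> dep_edges P" unfolding dep_edges_def using rG a b by blast
    have "(p j, b) \<in> (dep_edges P)\<^sup>*"
      using d e unfolding depends_def by (rule rtrancl.rtrancl_into_rtrancl)
    thus "b \<in> U" unfolding U_def depends_def using j by blast
  qed
  have GQ: "r \<in> module P p i" if "r \<in> Ground P" "a \<in> set (head r)" "a \<in> U" for r a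
  proof -
    from that(3) obtain j where "j \<le> i" "depends P (p j) a" unfolding U_def by blast
    thus ?thesis unfolding module_def using that(1,2) by blast
  qed
  have "stable_model (module P p i) (M \<inter> U)"
    by (rule splitting[OF QG QU GQ SM])
  thus False using inc unfolding consistent_def by blast
qed

end
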